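(* Let $\mathbb{A},\mathbb{B}$ be real square matrices of the same size such that $\mathbb{A}^{s}=\frac{1}{2}(\mathbb{A}+\mathbb{A}^{\dagger})$ is positive definite and $\mathbb{B}$ is a non-singular symmetric matrix with exactly one negative eigenvalue. Then $\mathbb{A}\mathbb{B}$ is invertible and has exactly one negative eigenvalue, and the geometric multiplicity of that eigenvalue is $1$.
   Context: $\mathbb{M}^{\dagger}$ denotes the transpose of $\mathbb{M}$. *)

theory Defs
  imports "Jordan_Normal_Form.Jordan_Normal_Form_Uniqueness"
begin

definition sym_part :: "real mat \<Rightarrow> real mat" where
  "sym_part A = (1/2) \<cdot>\<^sub>m (A + transpose_mat A)"

definition pos_def_mat :: "nat \<Rightarrow> real mat \<Rightarrow> bool" where
  "pos_def_mat n M \<longleftrightarrow> M \<in> carrier_mat n n \<and>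
     (\<forall>v \<in> carrier_vec n. v \<noteq> 0\<^sub>v n \<longrightarrow> v \<bullet> (M *\<^sub>v v) > 0)"

definition alg_mult :: "real mat \<Rightarrow> real \<Rightarrow> nat" where
  "alg_mult M l = Polynomial.order l (char_poly M)"

definition geom_mult :: "real mat \<Rightarrow> real \<Rightarrow> nat" where
  "geom_mult M l = kernel_dim (M - l \<cdot>\<^sub>m 1\<^sub>m (dim_row M))"

end

theory Submission
  imports Defs "Jordan_Normal_Form.Schur_Decomposition"
begin



lemma scalar_mult_transpose:
  fixes M :: "'a::comm_ring_1 mat"
  assumes M: "M \<in> carrier_mat n n" and u: "u \<in> carrier_vec n" and v: "v \<in> carrier_vec n"
  shows "u \<bullet> (M *\<^sub>v v) = (transpose_mat M *\<^sub>v u) \<bullet> v"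
proof -
  have "u \<bullet> (M *\<^sub>v v) = (\<Sum>i<n. u $ i * (\<Sum>j<n. M $$ (i,j) * v $ j))"
    using M u v by (auto simp: scalar_prod_def mult_mat_vec_def row_def lessThan_atLeast0 intro!: sum.cong)
  also have "\<dots> = (\<Sum>i<n. \<Sum>j<n. u $ i * M $$ (i,j) * v $ j)"
    by (simp add: sum_distrib_left mult.assoc)
  also have "\<dots> = (\<Sum>j<n. \<Sum>i<n. u $ i * M $$ (i,j) * v $ j)"
    by (rule sum.swap)
  also have "\<dots> = (transpose_mat M *\<^sub>v u) \<bullet> v"
    using M u v by (auto simp: scalar_prod_def mult_mat_vec_def row_def col_def lessThan_atLeast0 sum_distrib_right intro!: sum.cong)
  finally show ?thesis .
qed

lemma sym_scalar:
  fixes M :: "'a::comm_ring_1 mat"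
  assumes M: "M \<in> carrier_mat n n" and S: "transpose_mat M = M"
    and u: "u \<in> carrier_vec n" and v: "v \<in> carrier_vec n"
  shows "u \<bullet> (M *\<^sub>v v) = (M *\<^sub>v u) \<bullet> v"
  using scalar_mult_transpose[OF M u v] S by simp

lemma bilin_sum:
  fixes M :: "'a::comm_ring_1 mat"
  assumes M: "M \<in> carrier_mat n n" and u: "u \<in> carrier_vec n" and v: "v \<in> carrier_vec n"
  shows "u \<bullet> (M *\<^sub>v v) = (\<Sum>i<n. \<Sum>j<n. u $ i * M $$ (i,j) * v $ j)"
proof -
  have "u \<bullet> (M *\<^sub>v v) = (\<Sum>i<n. u $ i * (\<Sum>j<n. M $$ (i,j) * v $ j))"
    using M u v by (auto simp: scalar_prod_def mult_mat_vec_def row_def lessThan_atLeast0 intro!: sum.cong)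
  also have "\<dots> = (\<Sum>i<n. \<Sum>j<n. u $ i * M $$ (i,j) * v $ j)"
    by (simp add: sum_distrib_left mult.assoc)
  finally show ?thesis .
qed

lemma sym_part_quad:
  assumes A: "A \<in> carrier_mat n n" and v: "v \<in> carrier_vec n"
  shows "v \<bullet> (sym_part A *\<^sub>v v) = v \<bullet> (A *\<^sub>v v)"
proof -
  have S: "sym_part A \<in> carrier_mat n n" using A unfolding sym_part_def by simp
  have "v \<bullet> (sym_part A *\<^sub>v v) = (\<Sum>i<n. \<Sum>j<n. v $ i * ((1/2) * (A $$ (i,j) + A $$ (j,i))) * v $ j)"
    unfolding bilin_sum[OF S v v] using A by (auto simp: sym_part_def intro!: sum.cong)
  also have "\<dots> = (1/2) * (\<Sum>i<n. \<Sum>j<n. v $ i * A $$ (i,j) * v $ j) + (1/2) * (\<Sum>i<n. \<Sum>j<n. v $ i * A $$ (j,i) * v $ j)"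
    by (simp add: sum_distrib_left sum.distrib algebra_simps)
  also have "(\<Sum>i<n. \<Sum>j<n. v $ i * A $$ (j,i) * v $ j) = (\<Sum>i<n. \<Sum>j<n. v $ i * A $$ (i,j) * v $ j)"
    by (subst sum.swap) (simp add: mult.commute mult.left_commute)
  finally show ?thesis using bilin_sum[OF A v v] by simp
qed

lemma posdef_quad:
  assumes A: "A \<in> carrier_mat n n" and P: "pos_def_mat n (sym_part A)"
    and v: "v \<in> carrier_vec n" and v0: "v \<noteq> 0\<^sub>v n"
  shows "v \<bullet> (A *\<^sub>v v) > 0"
  using P v v0 sym_part_quad[OF A v] unfolding pos_def_mat_def by auto

lemma invertible_kernel:
  fixes B :: "'a::field mat"
  assumes B: "B \<in> carrier_mat n n" and Bi: "invertible_mat B"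
    and v: "v \<in> carrier_vec n" and Bv: "B *\<^sub>v v = 0\<^sub>v n"
  shows "v = 0\<^sub>v n"
proof -
  from Bi obtain C where BC: "B * C = 1\<^sub>m (dim_row B)" and CB: "C * B = 1\<^sub>m (dim_row C)"
    unfolding invertible_mat_def inverts_mat_def by auto
  have "dim_col (C * B) = n" using B by simp
  hence "dim_row C = n" using CB by simp
  moreover have "dim_col (B * C) = n" using BC B by simp
  hence "dim_col C = n" by simp
  ultimately have C: "C \<in> carrier_mat n n" by auto
  have "v = (C * B) *\<^sub>v v" using CB C v by simp
  also have "\<dots> = C *\<^sub>v (B *\<^sub>v v)" using C B v by (simp add: assoc_mult_mat_vec)
  also have "\<dots> = 0\<^sub>v n" using Bv C by (intro eq_vecI) auto
  finally show ?thesis .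
qed

lemma det_ne0_invertible:
  fixes M :: "'a::field mat"
  assumes M: "M \<in> carrier_mat n n" and d: "det M \<noteq> 0"
  shows "invertible_mat M"
proof -
  from det_non_zero_imp_unit[OF M d, of undefined]
  obtain X where X: "X \<in> carrier_mat n n" "X * M = 1\<^sub>m n" "M * X = 1\<^sub>m n"
    unfolding Units_def ring_mat_def by auto
  thus ?thesis using M unfolding invertible_mat_def inverts_mat_def square_mat.simps by auto
qed

lemma quad_real:
  fixes l1 l2 p q r :: real
  assumes l1: "l1 < 0" and l2: "l2 < 0"
    and pos: "\<And>a b. a \<noteq> 0 \<or> b \<noteq> 0 \<Longrightarrow> a * (a * l1) * p + (a * (b * l2) + b * (a * l1)) * q + b * (b * l2) * r > 0"
    and ab: "a \<noteq> 0 \<or> b \<noteq> 0"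
  shows "a * a * p + (a * b + b * a) * q + b * b * r < 0"
proof -
  have "l1 * p > 0" using pos[of 1 0] by simp
  hence p: "p < 0" using l1 by (simp add: zero_less_mult_iff)
  have "l2 * r > 0" using pos[of 0 1] by simp
  hence r: "r < 0" using l2 by (simp add: zero_less_mult_iff)
  define x where "x = - (l1 + l2) * q"
  define y where "y = 2 * l1 * p"
  have y0: "y \<noteq> 0" using l1 p unfolding y_def by simp
  have "x * (x * l1) * p + (x * (y * l2) + y * (x * l1)) * q + y * (y * l2) * r > 0"
    using pos[of x y] y0 by auto
  also have "x * (x * l1) * p + (x * (y * l2) + y * (x * l1)) * q + y * (y * l2) * r
     = l1 * p * (4 * l1 * l2 * p * r - (l1 + l2)^2 * q^2)"
    unfolding x_def y_def by (simp add: algebra_simps power2_eq_square)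
  finally have disc: "4 * l1 * l2 * p * r - (l1 + l2)^2 * q^2 > 0"
    using mult_neg_neg[OF l1 p] by (metis zero_less_mult_pos)
  have "(l1 + l2)^2 \<ge> 4 * l1 * l2"
    using sum_squares_ge_zero[of "l1 - l2" 0] by (simp add: power2_eq_square algebra_simps)
  moreover have "q^2 \<ge> 0" by simp
  ultimately have "(l1 + l2)^2 * q^2 \<ge> (4 * l1 * l2) * q^2"
    by (rule mult_right_mono)
  with disc have "(4 * l1 * l2) * (p * r) > (4 * l1 * l2) * q^2" by (simp add: mult.assoc)
  moreover have "4 * l1 * l2 > 0" using l1 l2 by (simp add: mult_neg_neg)
  ultimately have pr: "p * r > q^2"
    using mult_less_cancel_left_pos by blast
  have "p * (a * a * p + (a * b + b * a) * q + b * b * r) = (p * a + q * b)^2 + (p * r - q^2) * b^2"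
    by (simp add: algebra_simps power2_eq_square)
  moreover have "(p * a + q * b)^2 + (p * r - q^2) * b^2 > 0"
  proof (cases "b = 0")
    case True
    then have "a \<noteq> 0" using ab by simp
    then show ?thesis using True p by simp
  next
    case False
    then have "(p * r - q^2) * b^2 > 0" using pr by simp
    then show ?thesis by (smt (verit) zero_le_power2)
  qed
  ultimately have "p * (a * a * p + (a * b + b * a) * q + b * b * r) > 0" by simp
  thus ?thesis using p by (simp add: zero_less_mult_iff)
qed

lemma expand2:
  fixes M :: "real mat"
  assumes M: "M \<in> carrier_mat n n" and S: "transpose_mat M = M"
    and v1: "v1 \<in> carrier_vec n" and v2: "v2 \<in> carrier_vec n"
  shows "(a \<cdot>\<^sub>v v1 + b \<cdot>\<^sub>v v2) \<bullet> (M *\<^sub>v (c \<cdot>\<^sub>v v1 + d \<cdot>\<^sub>v v2))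
     = a * c * (v1 \<bullet> (M *\<^sub>v v1)) + (a * d + b * c) * (v1 \<bullet> (M *\<^sub>v v2)) + b * d * (v2 \<bullet> (M *\<^sub>v v2))"
proof -
  have s: "v2 \<bullet> (M *\<^sub>v v1) = v1 \<bullet> (M *\<^sub>v v2)"
    using sym_scalar[OF M S v2 v1] comm_scalar_prod[of "M *\<^sub>v v2" n v1] M v1 v2 by simp
  have "M *\<^sub>v (c \<cdot>\<^sub>v v1 + d \<cdot>\<^sub>v v2) = c \<cdot>\<^sub>v (M *\<^sub>v v1) + d \<cdot>\<^sub>v (M *\<^sub>v v2)"
    using M v1 v2 by (simp add: mult_add_distrib_mat_vec[of M n n] mult_mat_vec[of M n n])
  hence "(a \<cdot>\<^sub>v v1 + b \<cdot>\<^sub>v v2) \<bullet> (M *\<^sub>v (c \<cdot>\<^sub>v v1 + d \<cdot>\<^sub>v v2))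
     = a * c * (v1 \<bullet> (M *\<^sub>v v1)) + a * d * (v1 \<bullet> (M *\<^sub>v v2)) + b * c * (v2 \<bullet> (M *\<^sub>v v1)) + b * d * (v2 \<bullet> (M *\<^sub>v v2))"
    using M v1 v2 by (simp add: add_scalar_prod_distrib[of _ n] scalar_prod_add_distrib[of _ n] algebra_simps)
  thus ?thesis using s by (simp add: algebra_simps)
qed

lemma lin2:
  fixes C :: "'a::field mat"
  assumes C: "C \<in> carrier_mat n n" and v1: "v1 \<in> carrier_vec n" and v2: "v2 \<in> carrier_vec n"
  shows "C *\<^sub>v (a \<cdot>\<^sub>v v1 + b \<cdot>\<^sub>v v2) = a \<cdot>\<^sub>v (C *\<^sub>v v1) + b \<cdot>\<^sub>v (C *\<^sub>v v2)"
  using C v1 v2 by (simp add: mult_add_distrib_mat_vec[of C n n] mult_mat_vec[of C n n])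

lemma key_neg:
  fixes A B :: "real mat"
  assumes A: "A \<in> carrier_mat n n" and B: "B \<in> carrier_mat n n"
    and Apd: "pos_def_mat n (sym_part A)"
    and Bsym: "transpose_mat B = B"
    and Binv: "invertible_mat B"
    and v1: "v1 \<in> carrier_vec n" and v2: "v2 \<in> carrier_vec n"
    and e1: "(A * B) *\<^sub>v v1 = l1 \<cdot>\<^sub>v v1" and e2: "(A * B) *\<^sub>v v2 = l2 \<cdot>\<^sub>v v2"
    and l1: "l1 < 0" and l2: "l2 < 0"
    and ind: "\<And>a b. a \<cdot>\<^sub>v v1 + b \<cdot>\<^sub>v v2 = 0\<^sub>v n \<Longrightarrow> a = 0 \<and> b = 0"
    and ab: "a \<noteq> 0 \<or> b \<noteq> 0"
  shows "(a \<cdot>\<^sub>v v1 + b \<cdot>\<^sub>v v2) \<bullet> (B *\<^sub>v (a \<cdot>\<^sub>v v1 + b \<cdot>\<^sub>v v2)) < 0"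
proof -
  let ?p = "v1 \<bullet> (B *\<^sub>v v1)" and ?q = "v1 \<bullet> (B *\<^sub>v v2)" and ?r = "v2 \<bullet> (B *\<^sub>v v2)"
  have pos: "a * (a * l1) * ?p + (a * (b * l2) + b * (a * l1)) * ?q + b * (b * l2) * ?r > 0"
    if ab: "a \<noteq> 0 \<or> b \<noteq> 0" for a b
  proof -
    let ?x = "a \<cdot>\<^sub>v v1 + b \<cdot>\<^sub>v v2"
    have x: "?x \<in> carrier_vec n" using v1 v2 by simp
    have x0: "?x \<noteq> 0\<^sub>v n" using ind ab by blast
    let ?w = "B *\<^sub>v ?x"
    have w: "?w \<in> carrier_vec n" using B x by simp
    have w0: "?w \<noteq> 0\<^sub>v n" using invertible_kernel[OF B Binv x] x0 by blast
    have "A *\<^sub>v ?w = (A * B) *\<^sub>v ?x" using A B x by simp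
    also have "\<dots> = a \<cdot>\<^sub>v ((A * B) *\<^sub>v v1) + b \<cdot>\<^sub>v ((A * B) *\<^sub>v v2)"
      by (rule lin2[of "A * B" n], insert A B v1 v2, auto)
    also have "\<dots> = (a * l1) \<cdot>\<^sub>v v1 + (b * l2) \<cdot>\<^sub>v v2"
      unfolding e1 e2 by (simp add: smult_smult_assoc)
    finally have Aw: "A *\<^sub>v ?w = (a * l1) \<cdot>\<^sub>v v1 + (b * l2) \<cdot>\<^sub>v v2" .
    have "0 < ?w \<bullet> (A *\<^sub>v ?w)" using posdef_quad[OF A Apd w w0] .
    also have "?w \<bullet> (A *\<^sub>v ?w) = ?x \<bullet> (B *\<^sub>v ((a * l1) \<cdot>\<^sub>v v1 + (b * l2) \<cdot>\<^sub>v v2))"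
      unfolding Aw using sym_scalar[OF B Bsym x, of "(a * l1) \<cdot>\<^sub>v v1 + (b * l2) \<cdot>\<^sub>v v2"] v1 v2 by simp
    also have "\<dots> = a * (a * l1) * ?p + (a * (b * l2) + b * (a * l1)) * ?q + b * (b * l2) * ?r"
      by (rule expand2[OF B Bsym v1 v2])
    finally show ?thesis .
  qed
  have "a * a * ?p + (a * b + b * a) * ?q + b * b * ?r < 0"
    by (rule quad_real[OF l1 l2 pos ab])
  thus ?thesis using expand2[OF B Bsym v1 v2, of a b a b] by simp
qed



lemma sym_real_eigenvalue:
  fixes M :: "real mat"
  assumes M: "M \<in> carrier_mat n n" and S: "transpose_mat M = M" and n: "n > 0"
  shows "\<exists>e. eigenvalue M e"
proof -
  let ?Mc = "map_mat complex_of_real M"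
  have Mc: "?Mc \<in> carrier_mat n n" using M by simp
  obtain as where cp: "char_poly ?Mc = (\<Prod>a\<leftarrow>as. [:- a, 1:])" and len: "length as = n"
    using char_poly_factorized[OF Mc] by blast
  from len n obtain a as' where as: "as = a # as'" by (cases as) auto
  have "poly (char_poly ?Mc) a = 0" unfolding cp as by simp
  hence "eigenvalue ?Mc a" using eigenvalue_root_char_poly[OF Mc] by simp
  then obtain z where z: "z \<in> carrier_vec n" "z \<noteq> 0\<^sub>v n" "?Mc *\<^sub>v z = a \<cdot>\<^sub>v z"
    unfolding eigenvalue_def eigenvector_def using Mc by auto
  have Mij: "M $$ (i,j) = M $$ (j,i)" if "i < n" "j < n" for i j
    using arg_cong[OF S, of "\<lambda>X. X $$ (i,j)"] that M by auto
  have ev: "(\<Sum>j<n. complex_of_real (M $$ (i,j)) * z $ j) = a * z $ i" if i: "i < n" for i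
  proof -
    have "(?Mc *\<^sub>v z) $ i = (a \<cdot>\<^sub>v z) $ i" using z(3) by simp
    thus ?thesis using i M z(1)
      by (auto simp: scalar_prod_def row_def lessThan_atLeast0 intro: sum.cong)
  qed
  define s where "s = (\<Sum>i<n. cnj (z $ i) * (\<Sum>j<n. complex_of_real (M $$ (i,j)) * z $ j))"
  define N where "N = (\<Sum>i<n. cnj (z $ i) * z $ i)"
  have "s = (\<Sum>i<n. cnj (z $ i) * (a * z $ i))"
    unfolding s_def by (intro sum.cong refl) (simp add: ev)
  hence s1: "s = a * N" unfolding N_def
    by (simp add: sum_distrib_left mult.commute mult.left_commute)
  have "cnj s = (\<Sum>i<n. z $ i * (\<Sum>j<n. complex_of_real (M $$ (i,j)) * cnj (z $ j)))"
    unfolding s_def by (simp add: cnj_sum)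
  also have "\<dots> = (\<Sum>i<n. \<Sum>j<n. z $ i * complex_of_real (M $$ (i,j)) * cnj (z $ j))"
    by (simp add: sum_distrib_left mult.assoc)
  also have "\<dots> = (\<Sum>j<n. \<Sum>i<n. z $ i * complex_of_real (M $$ (i,j)) * cnj (z $ j))"
    by (rule sum.swap)
  also have "\<dots> = (\<Sum>j<n. \<Sum>i<n. cnj (z $ j) * complex_of_real (M $$ (j,i)) * z $ i)"
    by (intro sum.cong refl) (simp add: Mij mult.commute mult.left_commute)
  also have "\<dots> = s" unfolding s_def by (simp add: sum_distrib_left mult.assoc)
  finally have cs: "cnj s = s" .
  have Nreal: "N = complex_of_real (\<Sum>i<n. (cmod (z $ i))^2)"
    unfolding N_def of_real_sum by (intro sum.cong refl) (metis complex_norm_square mult.commute)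
  obtain k where k: "k < n" "z $ k \<noteq> 0" using z(1,2) by (metis carrier_vecD eq_vecI index_zero_vec(1) index_zero_vec(2))
  have "(\<Sum>i<n. (cmod (z $ i))^2) \<ge> (cmod (z $ k))^2"
    by (rule member_le_sum) (use k in auto)
  moreover have "(cmod (z $ k))^2 > 0" using k by simp
  ultimately have Npos: "(\<Sum>i<n. (cmod (z $ i))^2) > 0" by linarith
  have "cnj a * N = a * N" using cs s1 Nreal by (metis complex_cnj_complex_of_real complex_cnj_mult)
  moreover have "N \<noteq> 0"
  proof
    assume "N = 0"
    hence "(\<Sum>i<n. (cmod (z $ i))^2) = 0" unfolding Nreal by (simp only: of_real_eq_0_iff)
    thus False using Npos by simp
  qed
  ultimately have "cnj a = a" by simp
  hence "Im a = 0" by (simp add: complex_eq_iff)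
  hence "a = complex_of_real (Re a)" by (simp add: complex_eq_iff)
  have ch: "char_poly ?Mc = map_poly complex_of_real (char_poly M)"
    by (rule of_real_hom.char_poly_hom[OF M])
  have "poly (map_poly complex_of_real (char_poly M)) a = 0"
    using \<open>poly (char_poly ?Mc) a = 0\<close> unfolding ch .
  moreover obtain r where r: "a = complex_of_real r" using \<open>a = complex_of_real (Re a)\<close> by blast
  ultimately have "poly (map_poly complex_of_real (char_poly M)) (complex_of_real r) = 0" by simp
  hence "complex_of_real (poly (char_poly M) r) = 0"
    unfolding of_real_hom.poly_map_poly .
  hence "poly (char_poly M) r = 0" by simp
  hence "eigenvalue M r" using eigenvalue_root_char_poly[OF M] by simp
  thus ?thesis by blast
qed


lemma real_conjugate_vec[simp]: fixes v :: "real vec" shows "conjugate v = v"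
  by (rule eq_vecI) (auto simp: conjugate_vec_def)

lemma self_scalar_pos: fixes v :: "real vec"
  assumes v: "v \<in> carrier_vec n" and v0: "v \<noteq> 0\<^sub>v n"
  shows "v \<bullet> v > 0"
proof -
  obtain k where k: "k < n" "v $ k \<noteq> 0" using v v0 by (metis carrier_vecD eq_vecI index_zero_vec(1) index_zero_vec(2))
  have "v \<bullet> v = (\<Sum>i<n. (v $ i)^2)" using v by (simp add: scalar_prod_def lessThan_atLeast0 power2_eq_square)
  also have "\<dots> \<ge> (v $ k)^2" by (rule member_le_sum) (use k in auto)
  finally show ?thesis using k by (smt (verit) zero_less_power2)
qed

lemma orthonormal_completion:
  fixes u :: "real vec"
  assumes u: "u \<in> carrier_vec n" and u1: "u \<bullet> u = 1"
  shows "\<exists>ws. length ws = n \<and> set ws \<subseteq> carrier_vec n \<and> hd ws = u \<and>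
    (\<forall>i<n. \<forall>j<n. ws ! i \<bullet> ws ! j = (if i = j then 1 else 0))"
proof -
  interpret cof_vec_space n "TYPE(real)" .
  have u0: "u \<noteq> 0\<^sub>v n" using u1 u by auto
  note bc = basis_completion[OF u u0]
  define b where "b = basis_completion u"
  have n0: "n > 0" using u u0 by (cases n) auto
  from bc(6) n0 obtain vs where bv: "b = u # vs" using bc(7) unfolding b_def by (cases "basis_completion u") auto
  define gs where "gs = gram_schmidt n b"
  note gr = gram_schmidt_result[OF bc(2) bc(4) bc(5) refl, folded b_def gs_def]
  have glen: "length gs = n" using gr(4) bc(6) unfolding b_def gs_def by simp
  have ghd: "hd gs = u" unfolding gs_def bv using u by simp
  have gcar: "set gs \<subseteq> carrier_vec n" using gr(3) unfolding b_def gs_def .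
  have gorth: "\<And>i j. i < n \<Longrightarrow> j < n \<Longrightarrow> gs ! i \<bullet> gs ! j = 0 \<longleftrightarrow> i \<noteq> j"
    using corthogonalD[OF gr(2)] glen unfolding b_def gs_def by simp
  define ws where "ws = map (\<lambda>w. (1 / sqrt (w \<bullet> w)) \<cdot>\<^sub>v w) gs"
  have gi: "gs ! i \<in> carrier_vec n" if "i < n" for i using gcar glen that by auto
  have gpos: "gs ! i \<bullet> gs ! i > 0" if i: "i < n" for i
  proof -
    have "gs ! i \<bullet> gs ! i \<noteq> 0" using gorth[OF i i] by simp
    hence "gs ! i \<noteq> 0\<^sub>v n" using gi[OF i] by auto
    thus ?thesis using self_scalar_pos[OF gi[OF i]] by simp
  qed
  have "length ws = n" unfolding ws_def using glen by simp
  moreover have "set ws \<subseteq> carrier_vec n" unfolding ws_def using gcar by auto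
  moreover have "hd ws = u" unfolding ws_def using ghd glen n0 u1
    by (cases gs) auto
  moreover have "ws ! i \<bullet> ws ! j = (if i = j then 1 else 0)" if i: "i < n" and j: "j < n" for i j
  proof -
    have "ws ! i \<bullet> ws ! j = (1 / sqrt (gs ! i \<bullet> gs ! i)) * (1 / sqrt (gs ! j \<bullet> gs ! j)) * (gs ! i \<bullet> gs ! j)"
      unfolding ws_def using i j glen gi[OF i] gi[OF j] by simp
    also have "\<dots> = (if i = j then 1 else 0)"
    proof (cases "i = j")
      case True
      have p: "gs ! i \<bullet> gs ! i > 0" using gpos[OF i] .
      then have "sqrt (gs ! i \<bullet> gs ! i) * sqrt (gs ! i \<bullet> gs ! i) = gs ! i \<bullet> gs ! i"
        by simp
      then show ?thesis using True p by (simp add: field_simps)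
    next
      case False
      then show ?thesis using gorth[OF i j] by simp
    qed
    finally show ?thesis .
  qed
  ultimately show ?thesis by blast
qed


lemma assoc4:
  fixes A B C D :: "'a::semiring_1 mat"
  assumes "A \<in> carrier_mat n n" "B \<in> carrier_mat n n" "C \<in> carrier_mat n n" "D \<in> carrier_mat n n"
  shows "A * B * (C * D) = A * (B * C) * D"
proof -
  have c: "C * D \<in> carrier_mat n n" "B * C \<in> carrier_mat n n" using assms by auto
  have "A * B * (C * D) = A * (B * (C * D))" by (rule assoc_mult_mat[OF assms(1,2) c(1)])
  also have "B * (C * D) = B * C * D" by (rule assoc_mult_mat[OF assms(2,3,4), symmetric])
  also have "A * (B * C * D) = A * (B * C) * D" by (rule assoc_mult_mat[OF assms(1) c(2) assms(4), symmetric])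
  finally show ?thesis .
qed

lemma assoc5:
  fixes A B C D M :: "'a::semiring_1 mat"
  assumes "A \<in> carrier_mat n n" "B \<in> carrier_mat n n" "C \<in> carrier_mat n n" "D \<in> carrier_mat n n"
    "M \<in> carrier_mat n n"
  shows "A * B * M * (C * D) = A * (B * M * C) * D"
proof -
  have c: "A * B \<in> carrier_mat n n" "B * M \<in> carrier_mat n n" using assms by auto
  have "A * B * M * (C * D) = A * (B * M) * (C * D)" using assoc_mult_mat[OF assms(1,2,5)] by simp
  also have "\<dots> = A * (B * M * C) * D" by (rule assoc4[OF assms(1) c(2) assms(3,4)])
  finally show ?thesis .
qed

lemma spectral:
  fixes M :: "real mat"
  assumes "M \<in> carrier_mat n n" "transpose_mat M = M"
  shows "\<exists>P \<in> carrier_mat n n. transpose_mat P * P = 1\<^sub>m n \<and> diagonal_mat (transpose_mat P * M * P)"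
  using assms
proof (induction n arbitrary: M)
  case 0
  show ?case by (intro bexI[of _ "1\<^sub>m 0"]) (auto simp: diagonal_mat_def)
next
  case (Suc m)
  have M: "M \<in> carrier_mat (Suc m) (Suc m)" and S: "transpose_mat M = M" using Suc.prems by auto
  obtain e where "eigenvalue M e" using sym_real_eigenvalue[OF M S] by auto
  then obtain u where u: "u \<in> carrier_vec (Suc m)" "u \<noteq> 0\<^sub>v (Suc m)" "M *\<^sub>v u = e \<cdot>\<^sub>v u"
    unfolding eigenvalue_def eigenvector_def using M by auto
  have upos: "u \<bullet> u > 0" using self_scalar_pos[OF u(1,2)] .
  define u1 where "u1 = (1 / sqrt (u \<bullet> u)) \<cdot>\<^sub>v u"
  have u1: "u1 \<in> carrier_vec (Suc m)" unfolding u1_def using u by simp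
  have "u1 \<bullet> u1 = (1 / sqrt (u \<bullet> u)) * (1 / sqrt (u \<bullet> u)) * (u \<bullet> u)"
    unfolding u1_def using u by simp
  also have "\<dots> = 1" using upos by (simp add: field_simps)
  finally have u11: "u1 \<bullet> u1 = 1" .
  have Mu1: "M *\<^sub>v u1 = e \<cdot>\<^sub>v u1" unfolding u1_def
    using mult_mat_vec[OF M u(1)] u(3) u by (simp add: smult_smult_assoc mult.commute)
  obtain ws where ws: "length ws = Suc m" "set ws \<subseteq> carrier_vec (Suc m)" "hd ws = u1"
    and orth: "\<And>i j. i < Suc m \<Longrightarrow> j < Suc m \<Longrightarrow> ws ! i \<bullet> ws ! j = (if i = j then 1 else 0)"
    using orthonormal_completion[OF u1 u11] by blast
  have wsi: "ws ! i \<in> carrier_vec (Suc m)" if "i < Suc m" for i using ws that by auto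
  have ws0: "ws ! 0 = u1" using ws(1,3) by (cases ws) auto
  define W where "W = mat_of_cols (Suc m) ws"
  have W: "W \<in> carrier_mat (Suc m) (Suc m)" unfolding W_def using ws(1) by (metis mat_of_cols_carrier(1))
  have colW: "col W j = ws ! j" if "j < Suc m" for j unfolding W_def using that ws(1) wsi[OF that] by simp
  have WtW: "transpose_mat W * W = 1\<^sub>m (Suc m)"
    by (rule eq_matI) (use W in \<open>auto simp: colW orth\<close>)
  define N where "N = transpose_mat W * M * W"
  have N: "N \<in> carrier_mat (Suc m) (Suc m)" unfolding N_def using W M by simp
  have Wt0: "transpose_mat W \<in> carrier_mat (Suc m) (Suc m)" using W by simp
  have Nij: "N $$ (i,j) = ws ! i \<bullet> (M *\<^sub>v ws ! j)" if ij: "i < Suc m" "j < Suc m" for i j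
  proof -
    have MW: "M * W \<in> carrier_mat (Suc m) (Suc m)" using M W by simp
    have "N = transpose_mat W * (M * W)" unfolding N_def by (rule assoc_mult_mat[OF Wt0 M W])
    hence "N $$ (i,j) = row (transpose_mat W) i \<bullet> col (M * W) j"
      using index_mult_mat(1)[of i "transpose_mat W" j "M * W"] ij Wt0 MW by simp
    also have "row (transpose_mat W) i = col W i" by (rule row_transpose) (use W ij in simp)
    also have "col (M * W) j = M *\<^sub>v col W j" by (rule col_mult2[OF M W ij(2)])
    finally show ?thesis unfolding colW[OF ij(1)] colW[OF ij(2)] .
  qed
  have Nsym: "N $$ (i,j) = N $$ (j,i)" if "i < Suc m" "j < Suc m" for i j
    unfolding Nij[OF that] Nij[OF that(2,1)]
    using sym_scalar[OF M S wsi[OF that(1)] wsi[OF that(2)]]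
      comm_scalar_prod[of "M *\<^sub>v ws ! i" "Suc m" "ws ! j"] M wsi[OF that(1)] wsi[OF that(2)] by simp
  have Ni0: "N $$ (i,0) = (if i = 0 then e else 0)" if "i < Suc m" for i
    unfolding Nij[OF that zero_less_Suc] ws0 Mu1 using orth[OF that zero_less_Suc] wsi[OF that] u1 ws0 by simp
  define N3 where "N3 = mat m m (\<lambda>(i,j). N $$ (Suc i, Suc j))"
  have N3: "N3 \<in> carrier_mat m m" unfolding N3_def by simp
  have N3S: "transpose_mat N3 = N3"
    by (rule eq_matI) (auto simp: N3_def Nsym)
  from Suc.IH[OF N3 N3S] obtain P3 where P3: "P3 \<in> carrier_mat m m"
    and P3o: "transpose_mat P3 * P3 = 1\<^sub>m m" and P3d: "diagonal_mat (transpose_mat P3 * N3 * P3)" by blast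
  define E where "E = mat 1 1 (\<lambda>_. e)"
  have E: "E \<in> carrier_mat 1 1" unfolding E_def by simp
  have Nblock: "N = four_block_mat E (0\<^sub>m 1 m) (0\<^sub>m m 1) N3"
  proof (rule eq_matI)
    fix i j assume i: "i < dim_row (four_block_mat E (0\<^sub>m 1 m) (0\<^sub>m m 1) N3)"
      and j: "j < dim_col (four_block_mat E (0\<^sub>m 1 m) (0\<^sub>m m 1) N3)"
    have i': "i < Suc m" and j': "j < Suc m" using i j E N3 by auto
    show "N $$ (i, j) = four_block_mat E (0\<^sub>m 1 m) (0\<^sub>m m 1) N3 $$ (i, j)"
      using i' j' E N3 Ni0[OF i'] Ni0[OF j'] Nsym[OF i' j']
      by (cases i; cases j) (auto simp: E_def N3_def)
  qed (use N E N3 in auto)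
  define Q where "Q = four_block_mat (1\<^sub>m 1) (0\<^sub>m 1 m) (0\<^sub>m m 1) P3"
  have Q: "Q \<in> carrier_mat (Suc m) (Suc m)" unfolding Q_def using P3 by auto
  have Qt: "transpose_mat Q = four_block_mat (1\<^sub>m 1) (0\<^sub>m 1 m) (0\<^sub>m m 1) (transpose_mat P3)"
    unfolding Q_def by (subst transpose_four_block_mat) (use P3 in auto)
  have QtQ: "transpose_mat Q * Q = 1\<^sub>m (Suc m)"
    unfolding Qt unfolding Q_def
    by (subst mult_four_block_mat[of _ 1 1 _ m _ m _ _ 1 _ m]) (use P3 P3o in auto)
  define P where "P = W * Q"
  have Wt: "transpose_mat W \<in> carrier_mat (Suc m) (Suc m)" using W by simp
  have Qtc: "transpose_mat Q \<in> carrier_mat (Suc m) (Suc m)" using Q by simp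
  have P: "P \<in> carrier_mat (Suc m) (Suc m)" unfolding P_def using W Q by simp
  have PtP: "transpose_mat P * P = 1\<^sub>m (Suc m)"
  proof -
    have "transpose_mat P * P = transpose_mat Q * (transpose_mat W * W) * Q"
      unfolding P_def transpose_mult[OF W Q] by (rule assoc4[OF Qtc Wt W Q])
    also have "\<dots> = 1\<^sub>m (Suc m)" unfolding WtW using Q QtQ by simp
    finally show ?thesis .
  qed
  have PMP: "transpose_mat P * M * P = transpose_mat Q * N * Q"
    unfolding P_def N_def transpose_mult[OF W Q] by (rule assoc5[OF Qtc Wt W Q M])
  have P3t: "transpose_mat P3 \<in> carrier_mat m m" using P3 by simp
  have b1: "four_block_mat (1\<^sub>m 1) (0\<^sub>m 1 m) (0\<^sub>m m 1) (transpose_mat P3) * four_block_mat E (0\<^sub>m 1 m) (0\<^sub>m m 1) N3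
     = four_block_mat E (0\<^sub>m 1 m) (0\<^sub>m m 1) (transpose_mat P3 * N3)"
    by (subst mult_four_block_mat[OF one_carrier_mat zero_carrier_mat zero_carrier_mat P3t E zero_carrier_mat zero_carrier_mat N3])
      (use E N3 P3t in auto)
  have b2: "four_block_mat E (0\<^sub>m 1 m) (0\<^sub>m m 1) (transpose_mat P3 * N3) * four_block_mat (1\<^sub>m 1) (0\<^sub>m 1 m) (0\<^sub>m m 1) P3
     = four_block_mat E (0\<^sub>m 1 m) (0\<^sub>m m 1) (transpose_mat P3 * N3 * P3)"
    by (subst mult_four_block_mat[OF E zero_carrier_mat zero_carrier_mat _ one_carrier_mat zero_carrier_mat zero_carrier_mat P3])
      (use E N3 P3t P3 in auto)
  have "transpose_mat Q * N * Q = four_block_mat E (0\<^sub>m 1 m) (0\<^sub>m m 1) (transpose_mat P3 * N3 * P3)"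
    unfolding Qt Nblock b1 unfolding Q_def b2 ..
  moreover have "diagonal_mat (four_block_mat E (0\<^sub>m 1 m) (0\<^sub>m m 1) (transpose_mat P3 * N3 * P3))"
    unfolding diagonal_mat_def
  proof (intro allI impI)
    fix i j
    let ?R = "transpose_mat P3 * N3 * P3"
    have R: "?R \<in> carrier_mat m m" using P3 N3 by simp
    assume i: "i < dim_row (four_block_mat E (0\<^sub>m 1 m) (0\<^sub>m m 1) ?R)"
      and j: "j < dim_col (four_block_mat E (0\<^sub>m 1 m) (0\<^sub>m m 1) ?R)" and ij: "i \<noteq> j"
    have i': "i < Suc m" and j': "j < Suc m" using i j R E by auto
    show "four_block_mat E (0\<^sub>m 1 m) (0\<^sub>m m 1) ?R $$ (i, j) = 0"
    proof (cases "i = 0 \<or> j = 0")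
      case True
      then show ?thesis using i' j' ij E R by (auto simp: E_def)
    next
      case False
      then obtain i1 j1 where ii: "i = Suc i1" and jj: "j = Suc j1" by (cases i; cases j) auto
      have "i1 < m" "j1 < m" "i1 \<noteq> j1" using i' j' ij ii jj by auto
      hence "?R $$ (i1, j1) = 0" using P3d R unfolding diagonal_mat_def by auto
      moreover have "dim_row E = 1" "dim_col E = 1" "dim_row ?R = m" "dim_col ?R = m" using E R by auto
      ultimately show ?thesis using ii jj \<open>i1 < m\<close> \<open>j1 < m\<close> by simp
    qed
  qed
  ultimately have "diagonal_mat (transpose_mat P * M * P)"
    unfolding PMP by simp
  thus ?case using P PtP by blast
qed



lemma order_linear_prod:
  fixes xs :: "real list"
  shows "Polynomial.order a (\<Prod>x\<leftarrow>xs. [:- x, 1:]) = length (filter ((=) a) xs)"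
proof (induction xs)
  case Nil
  then show ?case by simp
next
  case (Cons x xs)
  have nz: "(\<Prod>x\<leftarrow>xs. [:- x, 1:]) \<noteq> (0 :: real poly)"
    by (auto simp: prod_list_zero_iff)
  have l0: "[:- x, 1:] \<noteq> (0 :: real poly)" by simp
  have nz2: "[:- x, 1:] * (\<Prod>x\<leftarrow>xs. [:- x, 1:]) \<noteq> (0 :: real poly)" using nz l0 mult_eq_0_iff by blast
  have o1: "Polynomial.order a [:- x, 1:] = (if a = x then 1 else 0)"
  proof (cases "a = x")
    case True
    then show ?thesis using order_power_n_n[of a 1] by simp
  next
    case False
    then have "poly [:- x, 1:] a \<noteq> 0" by simp
    then have "Polynomial.order a [:- x, 1:] = 0" by (rule order_0I)
    then show ?thesis using False by simp
  qed
  show ?case using Cons order_mult[OF nz2, of a] o1 by simp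
qed

lemma diag_eigen:
  fixes B P :: "real mat"
  assumes B: "B \<in> carrier_mat n n" and P: "P \<in> carrier_mat n n"
    and PtP: "transpose_mat P * P = 1\<^sub>m n" and PPt: "P * transpose_mat P = 1\<^sub>m n"
    and D: "diagonal_mat (transpose_mat P * B * P)" and k: "k < n"
  shows "eigenvector B (col P k) ((transpose_mat P * B * P) $$ (k,k))"
proof -
  define Dm where "Dm = transpose_mat P * B * P"
  have Pt: "transpose_mat P \<in> carrier_mat n n" using P by simp
  have Dc: "Dm \<in> carrier_mat n n" unfolding Dm_def using P B by simp
  have "P * Dm = P * (transpose_mat P * B * P)" unfolding Dm_def ..
  also have "\<dots> = P * (transpose_mat P * (B * P))" using assoc_mult_mat[OF Pt B P] by simp
  also have "\<dots> = P * transpose_mat P * (B * P)" using assoc_mult_mat[OF P Pt, of "B * P" n] B P by simp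
  also have "\<dots> = B * P" unfolding PPt using B P by simp
  finally have BP: "B * P = P * Dm" by simp
  have ck: "col P k \<in> carrier_vec n" using P k by simp
  have "B *\<^sub>v col P k = col (B * P) k" by (rule col_mult2[OF B P k, symmetric])
  also have "\<dots> = col (P * Dm) k" unfolding BP ..
  also have "\<dots> = Dm $$ (k,k) \<cdot>\<^sub>v col P k"
  proof (rule eq_vecI)
    fix i assume i: "i < dim_vec (Dm $$ (k, k) \<cdot>\<^sub>v col P k)"
    hence i: "i < n" using P by simp
    have "col (P * Dm) k $ i = (\<Sum>j<n. P $$ (i,j) * Dm $$ (j,k))"
      using i k P Dc by (simp add: scalar_prod_def lessThan_atLeast0)
    also have "\<dots> = (\<Sum>j<n. if j = k then P $$ (i,k) * Dm $$ (k,k) else 0)"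
      using D Dc k unfolding Dm_def[symmetric] diagonal_mat_def by (intro sum.cong refl) auto
    also have "\<dots> = P $$ (i,k) * Dm $$ (k,k)" using k by simp
    finally show "col (P * Dm) k $ i = (Dm $$ (k, k) \<cdot>\<^sub>v col P k) $ i" using i k P by simp
  qed (use P Dc in auto)
  finally have ev: "B *\<^sub>v col P k = Dm $$ (k,k) \<cdot>\<^sub>v col P k" .
  have "col P k \<bullet> col P k = (transpose_mat P * P) $$ (k,k)" using P k by simp
  also have "\<dots> = 1" unfolding PtP using k by simp
  finally have "col P k \<noteq> 0\<^sub>v n" using ck by auto
  thus ?thesis using ev ck B unfolding eigenvector_def Dm_def by auto
qed


lemma conj_back:
  fixes B P :: "real mat"
  assumes B: "B \<in> carrier_mat n n" and P: "P \<in> carrier_mat n n"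
    and PPt: "P * transpose_mat P = 1\<^sub>m n"
  shows "P * (transpose_mat P * B * P) * transpose_mat P = B"
proof -
  have Pt: "transpose_mat P \<in> carrier_mat n n" using P by simp
  have "P * (transpose_mat P * B * P) * transpose_mat P = P * transpose_mat P * B * (P * transpose_mat P)"
    by (rule assoc5[OF P Pt P Pt B, symmetric])
  also have "\<dots> = B" unfolding PPt using B by simp
  finally show ?thesis .
qed

lemma quad_diag:
  fixes B P :: "real mat"
  assumes B: "B \<in> carrier_mat n n" and P: "P \<in> carrier_mat n n"
    and PPt: "P * transpose_mat P = 1\<^sub>m n"
    and D: "diagonal_mat (transpose_mat P * B * P)" and x: "x \<in> carrier_vec n"
  shows "x \<bullet> (B *\<^sub>v x) = (\<Sum>i<n. (transpose_mat P * B * P) $$ (i,i) * ((transpose_mat P *\<^sub>v x) $ i)^2)"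
proof -
  define Dm where "Dm = transpose_mat P * B * P"
  have Pt: "transpose_mat P \<in> carrier_mat n n" using P by simp
  have Dc: "Dm \<in> carrier_mat n n" unfolding Dm_def using P B by simp
  define y where "y = transpose_mat P *\<^sub>v x"
  have y: "y \<in> carrier_vec n" unfolding y_def using Pt x by simp
  have "B *\<^sub>v x = (P * Dm * transpose_mat P) *\<^sub>v x" using conj_back[OF B P PPt] unfolding Dm_def by simp
  also have "\<dots> = P *\<^sub>v (Dm *\<^sub>v y)" unfolding y_def
  proof -
    have DPt: "Dm * transpose_mat P \<in> carrier_mat n n" using Dc Pt by simp
    have "(P * Dm * transpose_mat P) *\<^sub>v x = (P * (Dm * transpose_mat P)) *\<^sub>v x"
      using assoc_mult_mat[OF P Dc Pt] by simp
    also have "\<dots> = P *\<^sub>v ((Dm * transpose_mat P) *\<^sub>v x)" by (rule assoc_mult_mat_vec[OF P DPt x])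
    also have "(Dm * transpose_mat P) *\<^sub>v x = Dm *\<^sub>v (transpose_mat P *\<^sub>v x)" by (rule assoc_mult_mat_vec[OF Dc Pt x])
    finally show "(P * Dm * transpose_mat P) *\<^sub>v x = P *\<^sub>v (Dm *\<^sub>v (transpose_mat P *\<^sub>v x))" .
  qed
  finally have "x \<bullet> (B *\<^sub>v x) = x \<bullet> (P *\<^sub>v (Dm *\<^sub>v y))" by simp
  also have "\<dots> = y \<bullet> (Dm *\<^sub>v y)" unfolding y_def
    by (rule scalar_mult_transpose[OF P x], rule mult_mat_vec_carrier[OF Dc y[unfolded y_def]])
  also have "\<dots> = (\<Sum>i<n. \<Sum>j<n. y $ i * Dm $$ (i,j) * y $ j)" by (rule bilin_sum[OF Dc y y])
  also have "\<dots> = (\<Sum>i<n. Dm $$ (i,i) * (y $ i)^2)"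
  proof (rule sum.cong[OF refl])
    fix i assume i: "i \<in> {..<n}"
    have "(\<Sum>j<n. y $ i * Dm $$ (i,j) * y $ j) = (\<Sum>j<n. if j = i then Dm $$ (i,i) * (y $ i)^2 else 0)"
      using D Dc i unfolding Dm_def[symmetric] diagonal_mat_def
      by (intro sum.cong refl) (auto simp: power2_eq_square)
    also have "\<dots> = Dm $$ (i,i) * (y $ i)^2" using i by simp
    finally show "(\<Sum>j<n. y $ i * Dm $$ (i,j) * y $ j) = Dm $$ (i,i) * (y $ i)^2" .
  qed
  finally show ?thesis unfolding Dm_def y_def .
qed

lemma inertia:
  fixes B :: "real mat"
  assumes B: "B \<in> carrier_mat n n"
    and Bsym: "transpose_mat B = B"
    and Binv: "invertible_mat B"
    and Bneg: "\<exists>l. l < 0 \<and> eigenvalue B l \<and> alg_mult B l = 1 \<and>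
                  (\<forall>m. m < 0 \<and> eigenvalue B m \<longrightarrow> m = l)"
  shows "\<exists>P \<in> carrier_mat n n. \<exists>k<n. transpose_mat P * P = 1\<^sub>m n \<and> P * transpose_mat P = 1\<^sub>m n \<and>
     diagonal_mat (transpose_mat P * B * P) \<and> (transpose_mat P * B * P) $$ (k,k) < 0 \<and>
     (\<forall>i<n. i \<noteq> k \<longrightarrow> (transpose_mat P * B * P) $$ (i,i) > 0)"
proof -
  obtain l where l: "l < 0" "eigenvalue B l" "alg_mult B l = 1"
    and lu: "\<And>m. m < 0 \<Longrightarrow> eigenvalue B m \<Longrightarrow> m = l" using Bneg by blast
  obtain P where P: "P \<in> carrier_mat n n" and PtP: "transpose_mat P * P = 1\<^sub>m n"
    and D: "diagonal_mat (transpose_mat P * B * P)" using spectral[OF B Bsym] by blast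
  have Pt: "transpose_mat P \<in> carrier_mat n n" using P by simp
  have PPt: "P * transpose_mat P = 1\<^sub>m n" using mat_mult_left_right_inverse[OF Pt P PtP] .
  define Dm where "Dm = transpose_mat P * B * P"
  have Dc: "Dm \<in> carrier_mat n n" unfolding Dm_def using P B by simp
  have eig: "eigenvalue B (Dm $$ (k,k))" if "k < n" for k
    using diag_eigen[OF B P PtP PPt D that] unfolding eigenvalue_def Dm_def by blast
  have nz: "Dm $$ (k,k) \<noteq> 0" if k: "k < n" for k
  proof
    assume "Dm $$ (k,k) = 0"
    with diag_eigen[OF B P PtP PPt D k] have ev: "B *\<^sub>v col P k = 0 \<cdot>\<^sub>v col P k" "col P k \<noteq> 0\<^sub>v n" "col P k \<in> carrier_vec n"
      unfolding eigenvector_def Dm_def using B by auto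
    have "0 \<cdot>\<^sub>v col P k = 0\<^sub>v n" using ev(3) P by (intro eq_vecI) auto
    with ev have "B *\<^sub>v col P k = 0\<^sub>v n" "col P k \<noteq> 0\<^sub>v n" "col P k \<in> carrier_vec n" by auto
    thus False using invertible_kernel[OF B Binv] by blast
  qed
  have sim: "similar_mat B Dm"
    unfolding similar_mat_def similar_mat_wit_def Let_def
    by (rule exI[of _ P], rule exI[of _ "transpose_mat P"])
       (use B P Pt Dc PPt PtP conj_back[OF B P PPt] in \<open>auto simp: Dm_def\<close>)
  have ut: "upper_triangular Dm" using D Dc unfolding upper_triangular_def diagonal_mat_def Dm_def by auto
  have cp: "char_poly B = (\<Prod>a\<leftarrow>diag_mat Dm. [:- a, 1:])"
    using char_poly_similar[OF sim] char_poly_upper_triangular[OF Dc ut] by simp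
  have len: "length (filter ((=) l) (diag_mat Dm)) = 1"
    using l(3) unfolding alg_mult_def cp order_linear_prod .
  have dl: "length (diag_mat Dm) = n" using Dc by (simp add: diag_mat_def)
  have dn: "diag_mat Dm ! i = Dm $$ (i,i)" if "i < n" for i using Dc that by (simp add: diag_mat_def)
  have cardS: "card {i. i < n \<and> l = Dm $$ (i,i)} = 1"
  proof -
    have "{i. i < length (diag_mat Dm) \<and> l = diag_mat Dm ! i} = {i. i < n \<and> l = Dm $$ (i,i)}"
      using dl dn by auto
    thus ?thesis using len unfolding length_filter_conv_card by simp
  qed
  then obtain k where kS: "{i. i < n \<and> l = Dm $$ (i,i)} = {k}" using card_1_singletonE by blast
  have "k \<in> {i. i < n \<and> l = Dm $$ (i,i)}" unfolding kS by blast
  hence k: "k < n" "Dm $$ (k,k) = l" by simp_all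
  have others: "Dm $$ (i,i) > 0" if i: "i < n" "i \<noteq> k" for i
  proof (rule ccontr)
    assume "\<not> Dm $$ (i,i) > 0"
    with nz[OF i(1)] have "Dm $$ (i,i) < 0" by simp
    with lu eig[OF i(1)] have "Dm $$ (i,i) = l" by blast
    hence "i \<in> {i. i < n \<and> l = Dm $$ (i,i)}" using i by simp
    thus False using kS i by auto
  qed
  show ?thesis using P k l(1) PtP PPt D others unfolding Dm_def by blast
qed



lemma no_neg_plane:
  fixes B :: "real mat"
  assumes B: "B \<in> carrier_mat n n"
    and Bsym: "transpose_mat B = B"
    and Binv: "invertible_mat B"
    and Bneg: "\<exists>l. l < 0 \<and> eigenvalue B l \<and> alg_mult B l = 1 \<and>
                  (\<forall>m. m < 0 \<and> eigenvalue B m \<longrightarrow> m = l)"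
    and v1: "v1 \<in> carrier_vec n" and v2: "v2 \<in> carrier_vec n"
  shows "\<exists>a b. (a \<noteq> 0 \<or> b \<noteq> 0) \<and> (a \<cdot>\<^sub>v v1 + b \<cdot>\<^sub>v v2) \<bullet> (B *\<^sub>v (a \<cdot>\<^sub>v v1 + b \<cdot>\<^sub>v v2)) \<ge> 0"
proof -
  obtain P k where P: "P \<in> carrier_mat n n" and k: "k < n" and PtP: "transpose_mat P * P = 1\<^sub>m n"
    and PPt: "P * transpose_mat P = 1\<^sub>m n" and D: "diagonal_mat (transpose_mat P * B * P)"
    and pos: "\<And>i. i < n \<Longrightarrow> i \<noteq> k \<Longrightarrow> (transpose_mat P * B * P) $$ (i,i) > 0"
    using inertia[OF B Bsym Binv Bneg] by blast
  have Pt: "transpose_mat P \<in> carrier_mat n n" using P by simp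
  define c1 where "c1 = (transpose_mat P *\<^sub>v v1) $ k"
  define c2 where "c2 = (transpose_mat P *\<^sub>v v2) $ k"
  obtain a b :: real where ab: "a \<noteq> 0 \<or> b \<noteq> 0" and abk: "a * c1 + b * c2 = 0"
  proof (cases "c1 = 0 \<and> c2 = 0")
    case True
    then show ?thesis using that[of 1 0] by simp
  next
    case False
    then show ?thesis using that[of c2 "- c1"] by (auto simp: algebra_simps)
  qed
  define x where "x = a \<cdot>\<^sub>v v1 + b \<cdot>\<^sub>v v2"
  have x: "x \<in> carrier_vec n" unfolding x_def using v1 v2 by simp
  have "transpose_mat P *\<^sub>v x = a \<cdot>\<^sub>v (transpose_mat P *\<^sub>v v1) + b \<cdot>\<^sub>v (transpose_mat P *\<^sub>v v2)"
    unfolding x_def by (rule lin2[OF Pt v1 v2])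
  hence yk: "(transpose_mat P *\<^sub>v x) $ k = 0" using k Pt v1 v2 abk unfolding c1_def c2_def by simp
  have "x \<bullet> (B *\<^sub>v x) = (\<Sum>i<n. (transpose_mat P * B * P) $$ (i,i) * ((transpose_mat P *\<^sub>v x) $ i)^2)"
    by (rule quad_diag[OF B P PPt D x])
  also have "\<dots> \<ge> 0"
  proof (rule sum_nonneg)
    fix i assume i: "i \<in> {..<n}"
    show "(transpose_mat P * B * P) $$ (i,i) * ((transpose_mat P *\<^sub>v x) $ i)^2 \<ge> 0"
    proof (cases "i = k")
      case True
      then show ?thesis using yk by simp
    next
      case False
      then show ?thesis using pos[of i] i by simp
    qed
  qed
  finally show ?thesis using ab unfolding x_def by blast
qed

lemma det_B_neg:
  fixes B :: "real mat"
  assumes B: "B \<in> carrier_mat n n"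
    and Bsym: "transpose_mat B = B"
    and Binv: "invertible_mat B"
    and Bneg: "\<exists>l. l < 0 \<and> eigenvalue B l \<and> alg_mult B l = 1 \<and>
                  (\<forall>m. m < 0 \<and> eigenvalue B m \<longrightarrow> m = l)"
  shows "det B < 0"
proof -
  obtain P k where P: "P \<in> carrier_mat n n" and k: "k < n" and PtP: "transpose_mat P * P = 1\<^sub>m n"
    and PPt: "P * transpose_mat P = 1\<^sub>m n" and D: "diagonal_mat (transpose_mat P * B * P)"
    and neg: "(transpose_mat P * B * P) $$ (k,k) < 0"
    and pos: "\<And>i. i < n \<Longrightarrow> i \<noteq> k \<Longrightarrow> (transpose_mat P * B * P) $$ (i,i) > 0"
    using inertia[OF B Bsym Binv Bneg] by blast
  have Pt: "transpose_mat P \<in> carrier_mat n n" using P by simp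
  define Dm where "Dm = transpose_mat P * B * P"
  have Dc: "Dm \<in> carrier_mat n n" unfolding Dm_def using P B by simp
  have ut: "upper_triangular Dm" using D Dc unfolding upper_triangular_def diagonal_mat_def Dm_def by auto
  have "det Dm = (\<Prod>i = 0..<n. Dm $$ (i,i))"
    using det_upper_triangular[OF ut Dc] Dc by (simp add: prod_list_diag_prod)
  also have "\<dots> = Dm $$ (k,k) * (\<Prod>i \<in> {0..<n} - {k}. Dm $$ (i,i))"
    using k by (subst prod.remove[of _ k]) auto
  finally have dD: "det Dm = Dm $$ (k,k) * (\<Prod>i \<in> {0..<n} - {k}. Dm $$ (i,i))" .
  have "(\<Prod>i \<in> {0..<n} - {k}. Dm $$ (i,i)) > 0"
    by (rule prod_pos) (use pos in \<open>auto simp: Dm_def\<close>)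
  moreover have "Dm $$ (k,k) < 0" using neg unfolding Dm_def .
  ultimately have dDn: "det Dm < 0" unfolding dD by (simp add: mult_neg_pos)
  have "det B = det (P * Dm * transpose_mat P)" using conj_back[OF B P PPt] unfolding Dm_def by simp
  also have "\<dots> = det P * det Dm * det (transpose_mat P)"
  proof -
    have PD: "P * Dm \<in> carrier_mat n n" using P Dc by simp
    show ?thesis using det_mult[OF PD Pt] det_mult[OF P Dc] by simp
  qed
  also have "det (transpose_mat P) = det P" by (rule det_transpose[OF P])
  finally have dB: "det B = det Dm * (det P * det P)" by simp
  have "det (transpose_mat P) * det P = 1" using det_mult[OF Pt P] PtP by simp
  hence "det P * det P = 1" using det_transpose[OF P] by simp
  thus ?thesis using dB dDn by simp
qed

lemma smult_one_mult_vec: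
  fixes x :: "real vec"
  assumes x: "x \<in> carrier_vec n"
  shows "(l \<cdot>\<^sub>m 1\<^sub>m n) *\<^sub>v x = l \<cdot>\<^sub>v x"
  by (rule eq_vecI) (use x in auto)

lemma neg_eig_transfer:
  fixes X :: "real mat"
  assumes X: "X \<in> carrier_mat n n" and e: "eigenvalue (- X) t"
  shows "eigenvalue X (- t)"
proof -
  obtain v where v: "v \<in> carrier_vec n" "v \<noteq> 0\<^sub>v n" "(- X) *\<^sub>v v = t \<cdot>\<^sub>v v"
    using e X unfolding eigenvalue_def eigenvector_def by auto
  have "(- X) *\<^sub>v v = - (X *\<^sub>v v)" using v X by simp
  hence h: "- (X *\<^sub>v v) = t \<cdot>\<^sub>v v" using v(3) by simp
  have "X *\<^sub>v v = (- t) \<cdot>\<^sub>v v"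
  proof (rule eq_vecI)
    fix i assume i: "i < dim_vec ((- t) \<cdot>\<^sub>v v)"
    have "(- (X *\<^sub>v v)) $ i = (t \<cdot>\<^sub>v v) $ i" using h by simp
    thus "(X *\<^sub>v v) $ i = ((- t) \<cdot>\<^sub>v v) $ i" using i X v(1) by simp
  qed (use X v(1) in simp)
  thus ?thesis using v X unfolding eigenvalue_def eigenvector_def by auto
qed

lemma det_pos:
  fixes X :: "real mat"
  assumes X: "X \<in> carrier_mat n n" and noe: "\<And>t. t \<le> 0 \<Longrightarrow> \<not> eigenvalue X t"
  shows "det X > 0"
proof -
  have mX: "- X \<in> carrier_mat n n" using X by simp
  define p where "p = char_poly (- X)"
  have p0: "poly p 0 = det X"
  proof -
    have "poly p 0 = det (- char_matrix (- X) 0)" unfolding p_def by (rule char_poly_matrix[OF mX])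
    also have "- char_matrix (- X) 0 = X" unfolding char_matrix_def
      by (rule eq_matI) (use X in auto)
    finally show ?thesis .
  qed
  have noroot: "poly p t \<noteq> 0" if "t \<ge> 0" for t
  proof
    assume "poly p t = 0"
    hence "eigenvalue (- X) t" unfolding p_def using eigenvalue_root_char_poly[OF mX] by simp
    hence "eigenvalue X (- t)" by (rule neg_eig_transfer[OF X])
    thus False using noe[of "- t"] that by simp
  qed
  have lc: "lead_coeff p = 1" using degree_monic_char_poly[OF mX] unfolding p_def by simp
  obtain N where N: "\<And>x. x \<ge> N \<Longrightarrow> poly p x \<ge> lead_coeff p"
    using poly_pinfty_gt_lc[of p] lc by auto
  show ?thesis
  proof (rule ccontr)
    assume "\<not> det X > 0"
    moreover have "det X \<noteq> 0" using noroot[of 0] p0 by simp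
    ultimately have "poly p 0 < 0" using p0 by simp
    moreover have "poly p (max N 1) > 0" using N[of "max N 1"] lc by simp
    moreover have "(0::real) < max N 1" by simp
    ultimately obtain x where "0 < x" "x < max N 1" "poly p x = 0"
      using poly_IVT_pos[of 0 "max N 1" p] by blast
    thus False using noroot[of x] by simp
  qed
qed



lemma vec_zero_comb:
  fixes v w :: "real vec"
  assumes v: "v \<in> carrier_vec n" and w: "w \<in> carrier_vec n" and i: "i < n"
    and z: "a \<cdot>\<^sub>v v + b \<cdot>\<^sub>v w = 0\<^sub>v n"
  shows "a * v $ i + b * w $ i = 0"
proof -
  have "(a \<cdot>\<^sub>v v + b \<cdot>\<^sub>v w) $ i = 0" using z i by simp
  thus ?thesis using v w i by simp
qed

lemma nonzero_index:
  fixes v :: "real vec"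
  assumes v: "v \<in> carrier_vec n" and v0: "v \<noteq> 0\<^sub>v n"
  shows "\<exists>i<n. v $ i \<noteq> 0"
  using v v0 by (metis carrier_vecD eq_vecI index_zero_vec(1) index_zero_vec(2))

lemma indep_eig:
  fixes C :: "real mat"
  assumes C: "C \<in> carrier_mat n n" and v1: "v1 \<in> carrier_vec n" and v2: "v2 \<in> carrier_vec n"
    and v10: "v1 \<noteq> 0\<^sub>v n" and v20: "v2 \<noteq> 0\<^sub>v n"
    and e1: "C *\<^sub>v v1 = l1 \<cdot>\<^sub>v v1" and e2: "C *\<^sub>v v2 = l2 \<cdot>\<^sub>v v2" and l: "l1 \<noteq> l2"
    and z: "a \<cdot>\<^sub>v v1 + b \<cdot>\<^sub>v v2 = 0\<^sub>v n"
  shows "a = 0 \<and> b = 0"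
proof -
  have "C *\<^sub>v (a \<cdot>\<^sub>v v1 + b \<cdot>\<^sub>v v2) = (a * l1) \<cdot>\<^sub>v v1 + (b * l2) \<cdot>\<^sub>v v2"
    unfolding lin2[OF C v1 v2] e1 e2 by (simp add: smult_smult_assoc)
  moreover have "C *\<^sub>v (a \<cdot>\<^sub>v v1 + b \<cdot>\<^sub>v v2) = 0\<^sub>v n" unfolding z using C by (intro eq_vecI) auto
  ultimately have z2: "(a * l1) \<cdot>\<^sub>v v1 + (b * l2) \<cdot>\<^sub>v v2 = 0\<^sub>v n" by simp
  obtain i where i: "i < n" "v2 $ i \<noteq> 0" using nonzero_index[OF v2 v20] by blast
  have h1: "a * v1 $ i + b * v2 $ i = 0" by (rule vec_zero_comb[OF v1 v2 i(1) z])
  have h2: "(a * l1) * v1 $ i + (b * l2) * v2 $ i = 0" by (rule vec_zero_comb[OF v1 v2 i(1) z2])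
  have "b * (l2 - l1) * v2 $ i = 0" using h1 h2
    by (smt (verit, ccfv_SIG) mult.commute mult.left_commute right_diff_distrib' mult_zero_right)
  hence b: "b = 0" using i l by simp
  obtain j where j: "j < n" "v1 $ j \<noteq> 0" using nonzero_index[OF v1 v10] by blast
  have "a * v1 $ j + b * v2 $ j = 0" by (rule vec_zero_comb[OF v1 v2 j(1) z])
  hence "a = 0" using b j by simp
  thus ?thesis using b by simp
qed

lemma no_two:
  fixes A B :: "real mat"
  assumes A: "A \<in> carrier_mat n n" and B: "B \<in> carrier_mat n n"
    and Apd: "pos_def_mat n (sym_part A)"
    and Bsym: "transpose_mat B = B"
    and Binv: "invertible_mat B"
    and Bneg: "\<exists>l. l < 0 \<and> eigenvalue B l \<and> alg_mult B l = 1 \<and>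
                  (\<forall>m. m < 0 \<and> eigenvalue B m \<longrightarrow> m = l)"
    and v1: "v1 \<in> carrier_vec n" and v2: "v2 \<in> carrier_vec n"
    and e1: "(A * B) *\<^sub>v v1 = l1 \<cdot>\<^sub>v v1" and e2: "(A * B) *\<^sub>v v2 = l2 \<cdot>\<^sub>v v2"
    and l1: "l1 < 0" and l2: "l2 < 0"
    and ind: "\<And>a b. a \<cdot>\<^sub>v v1 + b \<cdot>\<^sub>v v2 = 0\<^sub>v n \<Longrightarrow> a = 0 \<and> b = 0"
  shows False
proof -
  obtain a b where ab: "a \<noteq> 0 \<or> b \<noteq> 0"
    and q: "(a \<cdot>\<^sub>v v1 + b \<cdot>\<^sub>v v2) \<bullet> (B *\<^sub>v (a \<cdot>\<^sub>v v1 + b \<cdot>\<^sub>v v2)) \<ge> 0"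
    using no_neg_plane[OF B Bsym Binv Bneg v1 v2] by blast
  have "(a \<cdot>\<^sub>v v1 + b \<cdot>\<^sub>v v2) \<bullet> (B *\<^sub>v (a \<cdot>\<^sub>v v1 + b \<cdot>\<^sub>v v2)) < 0"
    by (rule key_neg[OF A B Apd Bsym Binv v1 v2 e1 e2 l1 l2 ind ab])
  thus False using q by simp
qed

lemma kerK:
  fixes C :: "real mat"
  assumes C: "C \<in> carrier_mat n n" and w: "w \<in> carrier_vec n"
  shows "(C - l \<cdot>\<^sub>m 1\<^sub>m n) *\<^sub>v w = 0\<^sub>v n \<longleftrightarrow> C *\<^sub>v w = l \<cdot>\<^sub>v w"
proof -
  have I: "l \<cdot>\<^sub>m 1\<^sub>m n \<in> carrier_mat n n" by simp
  have e: "(C - l \<cdot>\<^sub>m 1\<^sub>m n) *\<^sub>v w = C *\<^sub>v w - l \<cdot>\<^sub>v w"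
    using minus_mult_distrib_mat_vec[OF C I w] smult_one_mult_vec[OF w] by simp
  show ?thesis unfolding e
  proof
    assume h: "C *\<^sub>v w - l \<cdot>\<^sub>v w = 0\<^sub>v n"
    show "C *\<^sub>v w = l \<cdot>\<^sub>v w"
    proof (rule eq_vecI)
      fix i assume i: "i < dim_vec (l \<cdot>\<^sub>v w)"
      have "(C *\<^sub>v w - l \<cdot>\<^sub>v w) $ i = 0" using h i w by simp
      thus "(C *\<^sub>v w) $ i = (l \<cdot>\<^sub>v w) $ i" using i w C by simp
    qed (use C w in simp)
  next
    assume h: "C *\<^sub>v w = l \<cdot>\<^sub>v w"
    show "C *\<^sub>v w - l \<cdot>\<^sub>v w = 0\<^sub>v n" unfolding h using w by (intro eq_vecI) auto
  qed
qed

theorem lemma4p2: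
  fixes A B :: "real mat" and n :: nat
  assumes A: "A \<in> carrier_mat n n" and B: "B \<in> carrier_mat n n"
    and Apd: "pos_def_mat n (sym_part A)"
    and Bsym: "transpose_mat B = B"
    and Binv: "invertible_mat B"
    and Bneg: "\<exists>l. l < 0 \<and> eigenvalue B l \<and> alg_mult B l = 1 \<and>
                  (\<forall>m. m < 0 \<and> eigenvalue B m \<longrightarrow> m = l)"
  shows "invertible_mat (A * B) \<and>
         (\<exists>!l. l < 0 \<and> eigenvalue (A * B) l) \<and>
         (\<forall>l. l < 0 \<and> eigenvalue (A * B) l \<longrightarrow> geom_mult (A * B) l = 1)"
proof -
  let ?C = "A * B"
  have C: "?C \<in> carrier_mat n n" using A B by simp
  have dA: "det A > 0"
  proof (rule det_pos[OF A])
    fix t :: real assume t: "t \<le> 0"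
    show "\<not> eigenvalue A t"
    proof
      assume "eigenvalue A t"
      then obtain v where v: "v \<in> carrier_vec n" "v \<noteq> 0\<^sub>v n" "A *\<^sub>v v = t \<cdot>\<^sub>v v"
        unfolding eigenvalue_def eigenvector_def using A by auto
      have "v \<bullet> (A *\<^sub>v v) > 0" by (rule posdef_quad[OF A Apd v(1,2)])
      moreover have "v \<bullet> (A *\<^sub>v v) = t * (v \<bullet> v)" unfolding v(3) using v(1) by simp
      moreover have "v \<bullet> v > 0" by (rule self_scalar_pos[OF v(1,2)])
      moreover have "t * (v \<bullet> v) \<le> 0" using t \<open>v \<bullet> v > 0\<close> by (simp add: mult_nonpos_nonneg)
      ultimately show False by linarith
    qed
  qed
  have dB: "det B < 0" by (rule det_B_neg[OF B Bsym Binv Bneg])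
  have dC: "det ?C = det A * det B" by (rule det_mult[OF A B])
  have dCn: "det ?C < 0" unfolding dC using dA dB by (simp add: mult_pos_neg)
  have invC: "invertible_mat ?C" using det_ne0_invertible[OF C] dCn by simp
  have no0: "\<not> eigenvalue ?C 0"
  proof
    assume "eigenvalue ?C 0"
    then obtain v where v: "v \<in> carrier_vec n" "v \<noteq> 0\<^sub>v n" "?C *\<^sub>v v = 0 \<cdot>\<^sub>v v"
      unfolding eigenvalue_def eigenvector_def using C by auto
    have "?C *\<^sub>v v = 0\<^sub>v n" unfolding v(3) using v(1) by (intro eq_vecI) auto
    thus False using invertible_kernel[OF C invC v(1)] v(2) by simp
  qed
  have ex: "\<exists>l. l < 0 \<and> eigenvalue ?C l"
  proof (rule ccontr)
    assume "\<not> (\<exists>l. l < 0 \<and> eigenvalue ?C l)"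
    hence "\<And>t. t \<le> 0 \<Longrightarrow> \<not> eigenvalue ?C t" using no0 by (metis less_eq_real_def)
    hence "det ?C > 0" by (rule det_pos[OF C])
    thus False using dCn by simp
  qed
  have uniq: "l1 = l2" if l1: "l1 < 0" "eigenvalue ?C l1" and l2: "l2 < 0" "eigenvalue ?C l2" for l1 l2
  proof (rule ccontr)
    assume ne: "l1 \<noteq> l2"
    obtain v1 where v1: "v1 \<in> carrier_vec n" "v1 \<noteq> 0\<^sub>v n" "?C *\<^sub>v v1 = l1 \<cdot>\<^sub>v v1"
      using l1(2) C unfolding eigenvalue_def eigenvector_def by auto
    obtain v2 where v2: "v2 \<in> carrier_vec n" "v2 \<noteq> 0\<^sub>v n" "?C *\<^sub>v v2 = l2 \<cdot>\<^sub>v v2"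
      using l2(2) C unfolding eigenvalue_def eigenvector_def by auto
    show False
      by (rule no_two[OF A B Apd Bsym Binv Bneg v1(1) v2(1) v1(3) v2(3) l1(1) l2(1)])
         (rule indep_eig[OF C v1(1) v2(1) v1(2) v2(2) v1(3) v2(3) ne])
  qed
  have geom: "geom_mult ?C l = 1" if l: "l < 0" "eigenvalue ?C l" for l
  proof -
    let ?K = "?C - l \<cdot>\<^sub>m 1\<^sub>m n"
    have K: "?K \<in> carrier_mat n n" by (rule minus_carrier_mat) simp
    have dr: "dim_row ?C = n" using A by simp
    obtain v1 where v1: "v1 \<in> carrier_vec n" "v1 \<noteq> 0\<^sub>v n" "?C *\<^sub>v v1 = l \<cdot>\<^sub>v v1"
      using l(2) C unfolding eigenvalue_def eigenvector_def by auto
    interpret Kr: kernel n n ?K by (unfold_locales) (rule K)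
    have memK: "w \<in> mat_kernel ?K \<longleftrightarrow> w \<in> carrier_vec n \<and> ?C *\<^sub>v w = l \<cdot>\<^sub>v w" for w
      using kerK[OF C, of w l] mat_kernel[OF K] by auto
    have v1K: "v1 \<in> mat_kernel ?K" using memK v1 by simp
    have mult: "\<exists>c. w = c \<cdot>\<^sub>v v1" if w: "w \<in> mat_kernel ?K" for w
    proof -
      have wc: "w \<in> carrier_vec n" and we: "?C *\<^sub>v w = l \<cdot>\<^sub>v w" using w memK by auto
      show ?thesis
      proof (cases "\<forall>a b. a \<cdot>\<^sub>v v1 + b \<cdot>\<^sub>v w = 0\<^sub>v n \<longrightarrow> a = 0 \<and> b = 0")
        case True
        have False
          by (rule no_two[OF A B Apd Bsym Binv Bneg v1(1) wc v1(3) we l(1) l(1)]) (use True in blast)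
        thus ?thesis ..
      next
        case False
        then obtain a b where z: "a \<cdot>\<^sub>v v1 + b \<cdot>\<^sub>v w = 0\<^sub>v n" and nz: "a \<noteq> 0 \<or> b \<noteq> 0" by blast
        have b0: "b \<noteq> 0"
        proof
          assume b: "b = 0"
          then have a: "a \<noteq> 0" using nz by simp
          obtain i where i: "i < n" "v1 $ i \<noteq> 0" using nonzero_index[OF v1(1,2)] by blast
          have "a * v1 $ i + b * w $ i = 0" by (rule vec_zero_comb[OF v1(1) wc i(1) z])
          thus False using a b i by simp
        qed
        have "w = (- a / b) \<cdot>\<^sub>v v1"
        proof (rule eq_vecI)
          fix i assume i: "i < dim_vec ((- a / b) \<cdot>\<^sub>v v1)"
          hence i: "i < n" using v1 by simp
          have "a * v1 $ i + b * w $ i = 0" by (rule vec_zero_comb[OF v1(1) wc i z])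
          hence "w $ i = (- a / b) * v1 $ i" using b0 by (simp add: field_simps)
          thus "w $ i = ((- a / b) \<cdot>\<^sub>v v1) $ i" using i v1 by simp
        qed (use wc v1 in simp)
        thus ?thesis by blast
      qed
    qed
    have gen: "Kr.Ker.span {v1} = mat_kernel ?K"
    proof
      show "Kr.Ker.span {v1} \<subseteq> mat_kernel ?K" using Kr.Ker.span_is_subset2 v1K by simp
      show "mat_kernel ?K \<subseteq> Kr.Ker.span {v1}"
      proof
        fix w assume w: "w \<in> mat_kernel ?K"
        then obtain c where c: "w = c \<cdot>\<^sub>v v1" using mult by blast
        have sub: "submodule class_ring (Kr.Ker.span {v1}) Kr.VK"
          using Kr.Ker.span_is_submodule v1K by simp
        have "v1 \<in> Kr.Ker.span {v1}" using Kr.Ker.span_self v1K by simp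
        hence "c \<cdot>\<^sub>v v1 \<in> Kr.Ker.span {v1}" using submodule.smult_closed[OF sub, of c v1] by simp
        thus "w \<in> Kr.Ker.span {v1}" unfolding c .
      qed
    qed
    have "Kr.Ker.dim = 1" by (rule Kr.Ker.dim1I) (use gen v1K v1(2) in auto)
    thus ?thesis unfolding geom_mult_def dr using Kr.kernel_dim by simp
  qed
  show ?thesis using invC ex uniq geom by blast
qed

end
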